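(* Let $\Gamma=A\ast B$ with $A,B$ non-trivial, such that $A$ contains an element of infinite order. Then there is a linear isometric embedding $\mathcal{D}(\mathbb{Z})\hookrightarrow\mathrm{H}^2_\mathrm{b}(\Gamma,\mathbb{R})$. In particular, the Banach space $\mathrm{H}^2_\mathrm{b}(\Gamma,\mathbb{R})$ (with the Gromov norm) is non-separable.
   Context: For a group $G$, the defect space $\mathcal{D}(G)$ is the space of bounded alternating functions $f:G\to\mathbb{R}$ ($f(g^{-1})=-f(g)$) with the norm $\mathrm{def}\, f=\sup_{g,h}|f(g)+f(h)-f(gh)|$. The Gromov norm of the class $\omega_f\in\mathrm{H}^2_\mathrm{b}(\Gamma,\mathbb{R})$ of a quasimorphism $f$ (the bounded class of $\partial f(g,h)=f(g)+f(h)-f(gh)$) is $\inf\{\mathrm{def}\,(f+\beta):\beta\text{ bounded}\}$; in general it is the quotient seminorm from the bounded bar complex, which is a norm in degree 2. *)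

theory Defs
  imports "HOL-Algebra.Group" Complex_Main "HOL-Library.Countable_Set"
begin

definition reduced_word :: "('g, 'm) monoid_scheme \<Rightarrow> 'g set \<Rightarrow> 'g set \<Rightarrow> (bool \<times> 'g) list \<Rightarrow> bool" where
  "reduced_word G A B ws \<longleftrightarrow>
     (\<forall>(t, x) \<in> set ws. x \<in> (if t then A else B) \<and> x \<noteq> \<one>\<^bsub>G\<^esub>) \<and>
     (\<forall>i. Suc i < length ws \<longrightarrow> fst (ws ! i) \<noteq> fst (ws ! Suc i))"

definition word_eval :: "('g, 'm) monoid_scheme \<Rightarrow> (bool \<times> 'g) list \<Rightarrow> 'g" where
  "word_eval G ws = foldr (\<lambda>(t, x) y. x \<otimes>\<^bsub>G\<^esub> y) ws \<one>\<^bsub>G\<^esub>"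

definition is_free_product :: "('g, 'm) monoid_scheme \<Rightarrow> 'g set \<Rightarrow> 'g set \<Rightarrow> bool" where
  "is_free_product G A B \<longleftrightarrow> group G \<and> subgroup A G \<and> subgroup B G \<and>
     bij_betw (word_eval G) {ws. reduced_word G A B ws} (carrier G)"

definition defect :: "(int \<Rightarrow> real) \<Rightarrow> real" where
  "defect f = (SUP (m, n) \<in> UNIV. \<bar>f m + f n - f (m + n)\<bar>)"

definition defect_space_Z :: "(int \<Rightarrow> real) set" where
  "defect_space_Z = {f. (\<exists>C. \<forall>n. \<bar>f n\<bar> \<le> C) \<and> (\<forall>n. f (- n) = - f n)}"

section \<open>Second bounded cohomology (inhomogeneous bar complex)\<close>

definition bounded1 :: "('g, 'm) monoid_scheme \<Rightarrow> ('g \<Rightarrow> real) \<Rightarrow> bool" where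
  "bounded1 G b \<longleftrightarrow> (\<exists>C. \<forall>g \<in> carrier G. \<bar>b g\<bar> \<le> C)"

definition bounded2 :: "('g, 'm) monoid_scheme \<Rightarrow> ('g \<Rightarrow> 'g \<Rightarrow> real) \<Rightarrow> bool" where
  "bounded2 G c \<longleftrightarrow> (\<exists>C. \<forall>g \<in> carrier G. \<forall>h \<in> carrier G. \<bar>c g h\<bar> \<le> C)"

definition cobound1 :: "('g, 'm) monoid_scheme \<Rightarrow> ('g \<Rightarrow> real) \<Rightarrow> 'g \<Rightarrow> 'g \<Rightarrow> real" where
  "cobound1 G b g h = b g + b h - b (g \<otimes>\<^bsub>G\<^esub> h)"

definition bcocycle2 :: "('g, 'm) monoid_scheme \<Rightarrow> ('g \<Rightarrow> 'g \<Rightarrow> real) \<Rightarrow> bool" where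
  "bcocycle2 G c \<longleftrightarrow> bounded2 G c \<and>
     (\<forall>g1 \<in> carrier G. \<forall>g2 \<in> carrier G. \<forall>g3 \<in> carrier G.
        c g2 g3 - c (g1 \<otimes>\<^bsub>G\<^esub> g2) g3 + c g1 (g2 \<otimes>\<^bsub>G\<^esub> g3) - c g1 g2 = 0)"

definition bcohomologous :: "('g, 'm) monoid_scheme \<Rightarrow> ('g \<Rightarrow> 'g \<Rightarrow> real) \<Rightarrow> ('g \<Rightarrow> 'g \<Rightarrow> real) \<Rightarrow> bool" where
  "bcohomologous G c1 c2 \<longleftrightarrow> (\<exists>b. bounded1 G b \<and>
     (\<forall>g \<in> carrier G. \<forall>h \<in> carrier G. c1 g h - c2 g h = cobound1 G b g h))"

definition gromov_norm :: "('g, 'm) monoid_scheme \<Rightarrow> ('g \<Rightarrow> 'g \<Rightarrow> real) \<Rightarrow> real" where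
  "gromov_norm G c = Inf {(SUP (g, h) \<in> carrier G \<times> carrier G. \<bar>c g h + cobound1 G b g h\<bar>) | b. bounded1 G b}"

end

theory Submission
  imports Defs
begin


fun alt :: "(bool \<times> 'g) list \<Rightarrow> bool" where
  "alt (x # y # r) = (fst x \<noteq> fst y \<and> alt (y # r))"
| "alt _ = True"

lemma alt_iff: "alt ws \<longleftrightarrow> (\<forall>i. Suc i < length ws \<longrightarrow> fst (ws!i) \<noteq> fst (ws ! Suc i))"
proof (induction ws rule: alt.induct)
  case (1 x y r)
  show ?case
  proof
    assume "alt (x # y # r)"
    then show "\<forall>i. Suc i < length (x # y # r) \<longrightarrow> fst ((x # y # r) ! i) \<noteq> fst ((x # y # r) ! Suc i)"
      using 1 by (auto simp: nth_Cons split: nat.splits)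
  next
    assume H: "\<forall>i. Suc i < length (x # y # r) \<longrightarrow> fst ((x # y # r) ! i) \<noteq> fst ((x # y # r) ! Suc i)"
    have "fst x \<noteq> fst y" using H[rule_format, of 0] by simp
    moreover have "\<forall>i. Suc i < length (y # r) \<longrightarrow> fst ((y # r) ! i) \<noteq> fst ((y # r) ! Suc i)"
      using H[rule_format, of "Suc _"] by simp
    ultimately show "alt (x # y # r)" using 1 by simp
  qed
qed auto

lemma alt_Cons: "alt (x # xs) \<longleftrightarrow> alt xs \<and> (xs \<noteq> [] \<longrightarrow> fst x \<noteq> fst (hd xs))"
  by (cases xs) auto

lemma alt_append: "alt (xs @ ys) \<longleftrightarrow> alt xs \<and> alt ys \<and> (xs \<noteq> [] \<longrightarrow> ys \<noteq> [] \<longrightarrow> fst (last xs) \<noteq> fst (hd ys))"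
proof (induction xs)
  case Nil then show ?case by simp
next
  case (Cons x xs) then show ?case by (cases xs; cases ys) (auto simp: alt_Cons)
qed

lemma reduced_word_iff: "reduced_word G A B ws \<longleftrightarrow>
   (\<forall>(t, x) \<in> set ws. x \<in> (if t then A else B) \<and> x \<noteq> \<one>\<^bsub>G\<^esub>) \<and> alt ws"
  unfolding reduced_word_def alt_iff by simp

lemma word_eval_Nil[simp]: "word_eval G [] = \<one>\<^bsub>G\<^esub>" by (simp add: word_eval_def)
lemma word_eval_Cons[simp]: "word_eval G ((t,x) # ws) = x \<otimes>\<^bsub>G\<^esub> word_eval G ws"
  by (simp add: word_eval_def)





locale fp =
  fixes G (structure) and A B :: "'g set"
  assumes fp: "is_free_product G A B"

sublocale fp \<subseteq> group G using fp by (simp add: is_free_product_def)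

context fp
begin

lemma subA: "subgroup A G" using fp by (simp add: is_free_product_def)
lemma subB: "subgroup B G" using fp by (simp add: is_free_product_def)

lemma sub_nat_pow: "subgroup H G \<Longrightarrow> x \<in> H \<Longrightarrow> x [^] (n::nat) \<in> H"
proof (induction n)
  case 0 then show ?case by (simp add: subgroup.one_closed)
next
  case (Suc n) then show ?case using subgroup.m_closed[of H G] by simp
qed

lemma sub_int_pow: "subgroup H G \<Longrightarrow> x \<in> H \<Longrightarrow> x [^] (k::int) \<in> H"
proof -
  assume h: "subgroup H G" "x \<in> H"
  show ?thesis
  proof (cases "k < 0")
    case True
    then show ?thesis unfolding int_pow_def2
      using sub_nat_pow[OF h, of "nat (-k)"] subgroup.m_inv_closed[OF h(1)] by simp
  next
    case False
    then show ?thesis unfolding int_pow_def2 using sub_nat_pow[OF h, of "nat k"] by simp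
  qed
qed

definition valid :: "bool \<Rightarrow> 'g \<Rightarrow> bool" where
  "valid t x \<longleftrightarrow> x \<in> (if t then A else B) \<and> x \<noteq> \<one>"

definition red :: "(bool \<times> 'g) list \<Rightarrow> bool" where
  "red ws \<longleftrightarrow> (\<forall>(t, x) \<in> set ws. valid t x) \<and> alt ws"

lemma red_eq: "reduced_word G A B ws = red ws"
  unfolding reduced_word_iff red_def valid_def by simp

lemma red_Nil[simp]: "red []" by (simp add: red_def)


lemma red_Cons: "red ((t,x) # ws) \<longleftrightarrow> valid t x \<and> red ws \<and> (ws \<noteq> [] \<longrightarrow> t \<noteq> fst (hd ws))"
  unfolding red_def by (auto simp: alt_Cons)

lemma red_append: "red (xs @ ys) \<longleftrightarrow> red xs \<and> red ys \<and> (xs \<noteq> [] \<longrightarrow> ys \<noteq> [] \<longrightarrow> fst (last xs) \<noteq> fst (hd ys))"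
  unfolding red_def by (auto simp: alt_append)

lemma valid_carrier: "valid t x \<Longrightarrow> x \<in> carrier G"
  using subgroup.subset[OF subA] subgroup.subset[OF subB] by (auto simp: valid_def split: if_splits)

definition car :: "(bool \<times> 'g) list \<Rightarrow> bool" where
  "car ws \<longleftrightarrow> snd ` set ws \<subseteq> carrier G"

lemma red_car: "red ws \<Longrightarrow> car ws"
  unfolding red_def car_def using valid_carrier by auto

lemma car_Cons[simp]: "car ((t,x) # ws) \<longleftrightarrow> x \<in> carrier G \<and> car ws"
  by (auto simp: car_def)
lemma car_append[simp]: "car (xs @ ys) \<longleftrightarrow> car xs \<and> car ys"
  by (auto simp: car_def)
lemma car_Nil[simp]: "car []" by (simp add: car_def)

lemma eval_closed: "car ws \<Longrightarrow> word_eval G ws \<in> carrier G"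
  by (induction ws) auto

lemma eval_append: "car xs \<Longrightarrow> car ys \<Longrightarrow> word_eval G (xs @ ys) = word_eval G xs \<otimes> word_eval G ys"
  by (induction xs) (auto simp: m_assoc eval_closed)

lemma bij: "bij_betw (word_eval G) {ws. red ws} (carrier G)"
  using fp by (simp add: is_free_product_def red_eq)

definition nf :: "'g \<Rightarrow> (bool \<times> 'g) list" where
  "nf g = the_inv_into {ws. red ws} (word_eval G) g"

lemma bij_inj: "inj_on (word_eval G) {ws. red ws}" using bij by (simp add: bij_betw_def)
lemma bij_img: "word_eval G ` {ws. red ws} = carrier G" using bij by (simp add: bij_betw_def)

lemma nf_eval: "red ws \<Longrightarrow> nf (word_eval G ws) = ws"
  unfolding nf_def by (rule the_inv_into_f_f[OF bij_inj]) simp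

lemma nf_red: "g \<in> carrier G \<Longrightarrow> red (nf g)"
proof -
  assume g: "g \<in> carrier G"
  have "the_inv_into {ws. red ws} (word_eval G) g \<in> {ws. red ws}"
    by (rule the_inv_into_into[OF bij_inj]) (use g bij_img in simp_all)
  then show ?thesis by (simp add: nf_def)
qed

lemma eval_nf: "g \<in> carrier G \<Longrightarrow> word_eval G (nf g) = g"
  unfolding nf_def by (rule f_the_inv_into_f[OF bij_inj]) (simp add: bij_img)

end



section \<open>Facts about the defect space\<close>

lemma dZ_bounded: "f \<in> defect_space_Z \<Longrightarrow> \<exists>C. \<forall>n. \<bar>f n\<bar> \<le> C"
  by (simp add: defect_space_Z_def)

lemma dZ_alt: "f \<in> defect_space_Z \<Longrightarrow> f (- n) = - f n"
  by (simp add: defect_space_Z_def)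

lemma dZ_zero: "f \<in> defect_space_Z \<Longrightarrow> f 0 = 0"
  using dZ_alt[of f 0] by simp

lemma dZ_bdd: assumes "f \<in> defect_space_Z"
  shows "bdd_above ((\<lambda>(m, n). \<bar>f m + f n - f (m + n)\<bar>) ` UNIV)"
proof -
  obtain C where C: "\<forall>n. \<bar>f n\<bar> \<le> C" using dZ_bounded[OF assms] by blast
  have "\<bar>f m + f n - f (m + n)\<bar> \<le> 3 * C" for m n
    using C[rule_format, of m] C[rule_format, of n] C[rule_format, of "m+n"] by linarith
  then show ?thesis by (intro bdd_aboveI[of _ "3*C"]) auto
qed

lemma dZ_delta: assumes "f \<in> defect_space_Z"
  shows "\<bar>f m + f n - f (m + n)\<bar> \<le> defect f"
proof -
  have "(\<lambda>(m, n). \<bar>f m + f n - f (m + n)\<bar>) (m, n) \<le> (SUP (m, n) \<in> UNIV. \<bar>f m + f n - f (m + n)\<bar>)"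
    by (rule cSUP_upper[OF _ dZ_bdd[OF assms]]) simp
  then show ?thesis by (simp add: defect_def)
qed

lemma dZ_defect_nonneg: "f \<in> defect_space_Z \<Longrightarrow> 0 \<le> defect f"
  using dZ_delta[of f 0 0] by simp

lemma dZ_abs: assumes f: "f \<in> defect_space_Z" shows "\<bar>f k\<bar> \<le> defect f"
proof -
  obtain C where C: "\<forall>n. \<bar>f n\<bar> \<le> C" using dZ_bounded[OF f] by blast
  have mult: "\<bar>real N * f k - f (int N * k)\<bar> \<le> real N * defect f" for N :: nat
  proof (induction N)
    case 0 then show ?case using dZ_zero[OF f] by simp
  next
    case (Suc N)
    have "\<bar>f (int N * k) + f k - f (int N * k + k)\<bar> \<le> defect f" by (rule dZ_delta[OF f])
    moreover have "int (Suc N) * k = int N * k + k" by (simp add: algebra_simps)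
    ultimately show ?case using Suc by (simp add: algebra_simps)
  qed
  show ?thesis
  proof (rule ccontr)
    assume "\<not> ?thesis"
    then have pos: "\<bar>f k\<bar> - defect f > 0" by simp
    obtain N :: nat where N: "real N * (\<bar>f k\<bar> - defect f) > C"
      using reals_Archimedean3[OF pos] by blast
    have "\<bar>real N * f k\<bar> - \<bar>f (int N * k)\<bar> \<le> \<bar>real N * f k - f (int N * k)\<bar>"
      by (rule abs_triangle_ineq2)
    moreover have "\<bar>real N * f k\<bar> = real N * \<bar>f k\<bar>" by (simp add: abs_mult)
    ultimately have "real N * \<bar>f k\<bar> - \<bar>f (int N * k)\<bar> \<le> real N * defect f"
      using mult[of N] by linarith
    then show False using N C[rule_format, of "int N * k"] by (simp add: algebra_simps)
  qed
qed

section \<open>The quasimorphism\<close>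

definition phiG :: "('g, 'm) monoid_scheme \<Rightarrow> 'g \<Rightarrow> (int \<Rightarrow> real) \<Rightarrow> 'g \<Rightarrow> real" where
  "phiG G a f x = (if \<exists>k::int. x = a [^]\<^bsub>G\<^esub> k then f (THE k. x = a [^]\<^bsub>G\<^esub> k) else 0)"

locale fpa = fp G A B for G :: "('g, 'm) monoid_scheme" (structure) and A B +
  fixes a :: 'g
  assumes aA: "a \<in> A" and ainf: "\<forall>n::nat. n > 0 \<longrightarrow> a [^] n \<noteq> \<one>"
begin

lemma a_car[simp]: "a \<in> carrier G"
  using aA subgroup.subset[OF subA] by blast

lemma apow_one: "a [^] (k::int) = \<one> \<Longrightarrow> k = 0"
proof (rule ccontr)
  assume h: "a [^] k = \<one>" "k \<noteq> 0"
  show False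
  proof (cases "k < 0")
    case True
    then have "inv (a [^] nat (-k)) = \<one>" using h(1) unfolding int_pow_def2 by simp
    then have "a [^] nat (-k) = \<one>" using inv_eq_1_iff[of "a [^] nat (-k)"] by simp
    moreover have "nat (-k) > 0" using True by simp
    ultimately show False using ainf by blast
  next
    case False
    then have "a [^] nat k = \<one>" using h(1) unfolding int_pow_def2 by simp
    moreover have "nat k > 0" using False h(2) by simp
    ultimately show False using ainf by blast
  qed
qed

lemma apow_inj: "a [^] (i::int) = a [^] j \<Longrightarrow> i = j"
proof -
  assume "a [^] i = a [^] j"
  then have "a [^] (i - j) = \<one>" by (simp add: int_pow_diff)
  then have "i - j = 0" by (rule apow_one)
  then show "i = j" by simp
qed

abbreviation "phi \<equiv> phiG G a"

lemma phi_pow[simp]: "phi f (a [^] (k::int)) = f k"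
proof -
  have the: "(THE j. a [^] k = a [^] j) = k" by (rule the_equality) (auto dest: apow_inj)
  have ex: "\<exists>j::int. a [^] k = a [^] j" by blast
  show ?thesis by (simp only: phiG_def if_P[OF ex] the)
qed

lemma phi_np: "\<not> (\<exists>k. x = a [^] (k::int)) \<Longrightarrow> phi f x = 0"
  by (simp add: phiG_def)

lemma phi_inv: assumes f: "f \<in> defect_space_Z" and x: "x \<in> carrier G"
  shows "phi f (inv x) = - phi f x"
proof (cases "\<exists>k. x = a [^] (k::int)")
  case True
  then obtain k where k: "x = a [^] (k::int)" by blast
  then have "inv x = a [^] (-k)" by (simp add: int_pow_neg)
  then show ?thesis using k dZ_alt[OF f] by simp
next
  case False
  have "\<not> (\<exists>k. inv x = a [^] (k::int))"
  proof
    assume "\<exists>k. inv x = a [^] (k::int)"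
    then obtain k where "inv x = a [^] (k::int)" by blast
    then have "x = a [^] (-k)" using x by (metis a_car int_pow_neg inv_inv)
    then show False using False by blast
  qed
  then show ?thesis using False by (simp add: phi_np)
qed

lemma phi_bound: assumes f: "f \<in> defect_space_Z" and x: "x \<in> carrier G" and y: "y \<in> carrier G"
  shows "\<bar>phi f x + phi f y - phi f (x \<otimes> y)\<bar> \<le> defect f"
proof (cases "\<exists>k. x = a [^] (k::int)")
  case True
  then obtain i where i: "x = a [^] (i::int)" by blast
  show ?thesis
  proof (cases "\<exists>k. y = a [^] (k::int)")
    case True
    then obtain j where j: "y = a [^] (j::int)" by blast
    then show ?thesis using i dZ_delta[OF f, of i j] by (simp add: int_pow_mult[symmetric])
  next
    case False
    have "\<not> (\<exists>k. x \<otimes> y = a [^] (k::int))"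
    proof
      assume "\<exists>k. x \<otimes> y = a [^] (k::int)"
      then obtain k where k: "x \<otimes> y = a [^] (k::int)" by blast
      have "y = inv x \<otimes> (x \<otimes> y)" using x y by (simp add: m_assoc[symmetric])
      also have "\<dots> = a [^] (-i + k)" using k i by (simp only: int_pow_mult[OF a_car] int_pow_neg[OF a_car])
      finally show False using False by blast
    qed
    then show ?thesis using i False dZ_abs[OF f, of i] by (simp add: phi_np)
  qed
next
  case False
  show ?thesis
  proof (cases "\<exists>k. y = a [^] (k::int)")
    case True
    then obtain j where j: "y = a [^] (j::int)" by blast
    have "\<not> (\<exists>k. x \<otimes> y = a [^] (k::int))"
    proof
      assume "\<exists>k. x \<otimes> y = a [^] (k::int)"
      then obtain k where k: "x \<otimes> y = a [^] (k::int)" by blast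
      have "x = (x \<otimes> y) \<otimes> inv y" using x y by (simp add: m_assoc)
      also have "\<dots> = a [^] (k + - j)" using k j by (simp only: int_pow_mult[OF a_car] int_pow_neg[OF a_car])
      finally show False using False by blast
    qed
    then show ?thesis using j False dZ_abs[OF f, of j] by (simp add: phi_np)
  next
    case False2: False
    show ?thesis
    proof (cases "\<exists>k. x \<otimes> y = a [^] (k::int)")
      case True
      then obtain k where k: "x \<otimes> y = a [^] (k::int)" by blast
      then show ?thesis using False False2 dZ_abs[OF f, of k] by (simp add: phi_np)
    next
      case False3: False
      then show ?thesis using False False2 dZ_defect_nonneg[OF f] by (simp add: phi_np)
    qed
  qed
qed

end



definition SG :: "('g, 'm) monoid_scheme \<Rightarrow> 'g \<Rightarrow> (int \<Rightarrow> real) \<Rightarrow> (bool \<times> 'g) list \<Rightarrow> real" where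
  "SG G a f ws = sum_list (map (\<lambda>(t, x). if t then phiG G a f x else 0) ws)"

definition FG :: "('g, 'm) monoid_scheme \<Rightarrow> 'g set \<Rightarrow> 'g set \<Rightarrow> 'g \<Rightarrow> (int \<Rightarrow> real) \<Rightarrow> 'g \<Rightarrow> real" where
  "FG G A B a f g = SG G a f (fp.nf G A B g)"

context fpa
begin

abbreviation "S \<equiv> SG G a"
abbreviation "F \<equiv> FG G A B a"

lemma S_Nil[simp]: "S f [] = 0" by (simp add: SG_def)
lemma S_Cons[simp]: "S f ((t, x) # ws) = (if t then phi f x else 0) + S f ws" by (simp add: SG_def)
lemma S_append[simp]: "S f (xs @ ys) = S f xs + S f ys" by (simp add: SG_def)

lemma F_eval: "red ws \<Longrightarrow> F f (word_eval G ws) = S f ws"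
  by (simp add: FG_def nf_eval)

lemma F_one[simp]: "F f \<one> = 0"
  using F_eval[of "[]"] by simp

lemma valid_mult: "valid t y \<Longrightarrow> valid t x \<Longrightarrow> y \<otimes> x \<noteq> \<one> \<Longrightarrow> valid t (y \<otimes> x)"
  unfolding valid_def using subgroup.m_closed[OF subA] subgroup.m_closed[OF subB] by (cases t) auto

lemma valid_inv: "valid t y \<Longrightarrow> valid t (inv y)"
  unfolding valid_def using subgroup.m_inv_closed[OF subA] subgroup.m_inv_closed[OF subB]
    valid_carrier[of t y] by (cases t) (auto simp: valid_def)

lemma upper_aux:
  assumes f: "f \<in> defect_space_Z"
  shows "g \<in> carrier G \<Longrightarrow> red hs \<Longrightarrow>
    \<bar>F f g + F f (word_eval G hs) - F f (g \<otimes> word_eval G hs)\<bar> \<le> defect f"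
proof (induction hs arbitrary: g)
  case Nil
  then show ?case using dZ_defect_nonneg[OF f] by simp
next
  case (Cons p hs')
  obtain t x where p: "p = (t, x)" by (cases p)
  have vx: "valid t x" and rh': "red hs'" and th: "hs' \<noteq> [] \<longrightarrow> t \<noteq> fst (hd hs')"
    using Cons.prems(2) unfolding p red_Cons by auto
  have xc: "x \<in> carrier G" using vx valid_carrier by blast
  have ch': "car hs'" using rh' red_car by blast
  define h' where "h' = word_eval G hs'"
  have h'c: "h' \<in> carrier G" unfolding h'_def using ch' eval_closed by blast
  have Fh: "F f (word_eval G (p # hs')) = (if t then phi f x else 0) + F f h'"
    using F_eval[OF Cons.prems(2)] F_eval[OF rh'] unfolding p h'_def by simp
  have evh: "word_eval G (p # hs') = x \<otimes> h'" unfolding p h'_def by simp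
  have g: "g \<in> carrier G" by (rule Cons.prems(1))
  define gs where "gs = nf g"
  have rgs: "red gs" unfolding gs_def using nf_red[OF g] .
  have egs: "word_eval G gs = g" unfolding gs_def using eval_nf[OF g] .
  have Fg: "F f g = S f gs" unfolding gs_def FG_def ..
  show ?case
  proof (cases "gs \<noteq> [] \<and> fst (last gs) = t")
    case True
    define us where "us = butlast gs"
    define y where "y = snd (last gs)"
    have lg: "last gs = (t, y)" using True unfolding y_def by (cases "last gs") simp
    have gsu: "gs = us @ [(t, y)]"
      using append_butlast_last_id[of gs] True lg unfolding us_def by simp
    have rus: "red us" and vy: "valid t y" and tus: "us \<noteq> [] \<longrightarrow> fst (last us) \<noteq> t"
      using rgs unfolding gsu red_append red_Cons by auto
    have yc: "y \<in> carrier G" using vy valid_carrier by blast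
    have cus: "car us" using rus red_car by blast
    have usc: "word_eval G us \<in> carrier G" using cus eval_closed by blast
    have gus: "g = word_eval G us \<otimes> y"
      using egs[symmetric] unfolding gsu by (simp add: eval_append cus yc)
    have Fg2: "F f g = S f us + (if t then phi f y else 0)" using Fg gsu by simp
    show ?thesis
    proof (cases "y \<otimes> x = \<one>")
      case True
      have "inv x = y" using inv_equality[OF True xc yc] .
      then have xy: "x = inv y" using inv_inv[OF xc] by simp
      have prod: "g \<otimes> (x \<otimes> h') = word_eval G us \<otimes> h'"
        using True gus usc yc xc h'c by (simp add: m_assoc[symmetric]) (simp add: m_assoc)
      have IH: "\<bar>F f (word_eval G us) + F f h' - F f (word_eval G us \<otimes> h')\<bar> \<le> defect f"
        using Cons.IH[OF usc rh'] unfolding h'_def .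
      have "phi f x = - phi f y" using xy phi_inv[OF f yc] by simp
      then show ?thesis using IH Fg2 Fh F_eval[OF rus] prod evh by auto
    next
      case False
      define ws where "ws = us @ (t, y \<otimes> x) # hs'"
      have vyx: "valid t (y \<otimes> x)" using valid_mult[OF vy vx False] .
      have rws: "red ws" unfolding ws_def red_append red_Cons using rus vyx rh' th tus by auto
      have ews: "word_eval G ws = g \<otimes> (x \<otimes> h')"
        unfolding ws_def using cus ch' xc yc usc h'c gus
        by (simp add: eval_append h'_def[symmetric] m_assoc)
      have "F f (g \<otimes> (x \<otimes> h')) = S f ws" using F_eval[OF rws] ews by simp
      also have "\<dots> = S f us + (if t then phi f (y \<otimes> x) else 0) + F f h'"
        using F_eval[OF rh'] unfolding ws_def h'_def by simp
      finally have Fws: "F f (g \<otimes> (x \<otimes> h')) = S f us + (if t then phi f (y \<otimes> x) else 0) + F f h'" .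
      have "\<bar>(if t then phi f y else 0) + (if t then phi f x else 0) - (if t then phi f (y \<otimes> x) else 0)\<bar> \<le> defect f"
        using phi_bound[OF f yc xc] dZ_defect_nonneg[OF f] by simp
      then show ?thesis using Fws Fg2 Fh evh by simp
    qed
  next
    case False
    define ws where "ws = gs @ (t, x) # hs'"
    have rws: "red ws" unfolding ws_def red_append red_Cons using rgs vx rh' th False by auto
    have cgs: "car gs" using rgs red_car by blast
    have ews: "word_eval G ws = g \<otimes> (x \<otimes> h')"
      unfolding ws_def using cgs ch' xc by (simp add: eval_append egs h'_def)
    have "F f (g \<otimes> (x \<otimes> h')) = S f ws" using F_eval[OF rws] ews by simp
    also have "\<dots> = F f g + (if t then phi f x else 0) + F f h'"
      using F_eval[OF rh'] Fg unfolding ws_def h'_def by simp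
    finally have "F f (g \<otimes> (x \<otimes> h')) = F f g + (if t then phi f x else 0) + F f h'" .
    then show ?thesis using Fh evh dZ_defect_nonneg[OF f] by simp
  qed
qed

lemma upper:
  assumes f: "f \<in> defect_space_Z" and g: "g \<in> carrier G" and h: "h \<in> carrier G"
  shows "\<bar>F f g + F f h - F f (g \<otimes> h)\<bar> \<le> defect f"
  using upper_aux[OF f g nf_red[OF h]] eval_nf[OF h] by simp

end



context group
begin

lemma cancel_l[simp]: "x \<in> carrier G \<Longrightarrow> y \<in> carrier G \<Longrightarrow> x \<otimes> (inv x \<otimes> y) = y"
  by (simp add: m_assoc[symmetric])
lemma cancel_l2[simp]: "x \<in> carrier G \<Longrightarrow> y \<in> carrier G \<Longrightarrow> inv x \<otimes> (x \<otimes> y) = y"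
  by (simp add: m_assoc[symmetric])

lemma W_step:
  assumes g: "g \<in> carrier G" and h: "h \<in> carrier G"
  and X: "X \<in> carrier G" and Y: "Y \<in> carrier G" and T: "T \<in> carrier G"
  shows "(X \<otimes> g \<otimes> g) \<otimes> (h \<otimes> (Y \<otimes> h)) \<otimes> inv (T \<otimes> (g \<otimes> h) \<otimes> (g \<otimes> h)) =
    ((X \<otimes> g \<otimes> inv Y \<otimes> inv X) \<otimes> (X \<otimes> Y \<otimes> g \<otimes> h \<otimes> inv X)
      \<otimes> inv (X \<otimes> g \<otimes> inv Y \<otimes> inv X) \<otimes> inv (X \<otimes> Y \<otimes> g \<otimes> h \<otimes> inv X)) \<otimes> (X \<otimes> Y \<otimes> inv T)"
  using assms by (simp add: m_assoc inv_mult_group)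

definition qm :: "('a \<Rightarrow> real) \<Rightarrow> real \<Rightarrow> bool" where
  "qm \<phi> D \<longleftrightarrow> (\<forall>x \<in> carrier G. \<forall>y \<in> carrier G. \<bar>\<phi> x + \<phi> y - \<phi> (x \<otimes> y)\<bar> \<le> D)
     \<and> (\<forall>x \<in> carrier G. \<phi> (inv x) = - \<phi> x)"

lemma qm_D: "qm \<phi> D \<Longrightarrow> x \<in> carrier G \<Longrightarrow> y \<in> carrier G \<Longrightarrow> \<bar>\<phi> x + \<phi> y - \<phi> (x \<otimes> y)\<bar> \<le> D"
  by (simp add: qm_def)
lemma qm_inv: "qm \<phi> D \<Longrightarrow> x \<in> carrier G \<Longrightarrow> \<phi> (inv x) = - \<phi> x"
  by (simp add: qm_def)
lemma qm_one: "qm \<phi> D \<Longrightarrow> \<phi> \<one> = 0"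
  using qm_inv[of \<phi> D \<one>] by simp

lemma qm_comm:
  assumes q: "qm \<phi> D" and P: "P \<in> carrier G" and Q: "Q \<in> carrier G"
  shows "\<bar>\<phi> (P \<otimes> Q \<otimes> inv P \<otimes> inv Q)\<bar> \<le> 3 * D"
proof -
  have 1: "\<bar>\<phi> P + \<phi> Q - \<phi> (P \<otimes> Q)\<bar> \<le> D" using qm_D[OF q P Q] .
  have 2: "\<bar>\<phi> (P \<otimes> Q) + \<phi> (inv P) - \<phi> (P \<otimes> Q \<otimes> inv P)\<bar> \<le> D" using qm_D[OF q, of "P \<otimes> Q" "inv P"] P Q by simp
  have 3: "\<bar>\<phi> (P \<otimes> Q \<otimes> inv P) + \<phi> (inv Q) - \<phi> (P \<otimes> Q \<otimes> inv P \<otimes> inv Q)\<bar> \<le> D"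
    using qm_D[OF q, of "P \<otimes> Q \<otimes> inv P" "inv Q"] P Q by simp
  show ?thesis using 1 2 3 qm_inv[OF q P] qm_inv[OF q Q] by linarith
qed

definition Wd :: "'a \<Rightarrow> 'a \<Rightarrow> nat \<Rightarrow> 'a" where
  "Wd g h N = g [^] N \<otimes> h [^] N \<otimes> inv ((g \<otimes> h) [^] N)"

lemma Wd_closed: "g \<in> carrier G \<Longrightarrow> h \<in> carrier G \<Longrightarrow> Wd g h N \<in> carrier G"
  by (simp add: Wd_def)

lemma Wd_rec:
  assumes g: "g \<in> carrier G" and h: "h \<in> carrier G"
  shows "\<exists>P \<in> carrier G. \<exists>Q \<in> carrier G. Wd g h (Suc (Suc N)) = (P \<otimes> Q \<otimes> inv P \<otimes> inv Q) \<otimes> Wd g h N"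
proof -
  define X where "X = g [^] N"
  define Y where "Y = h [^] N"
  define T where "T = (g \<otimes> h) [^] N"
  have X: "X \<in> carrier G" and Y: "Y \<in> carrier G" and T: "T \<in> carrier G"
    using g h by (auto simp: X_def Y_def T_def)
  have e1: "g [^] Suc (Suc N) = X \<otimes> g \<otimes> g" by (simp add: X_def)
  have "h [^] Suc (Suc N) = h [^] Suc N \<otimes> h" by simp
  also have "\<dots> = (h \<otimes> Y) \<otimes> h" using nat_pow_Suc2[OF h, of N] by (simp add: Y_def)
  also have "\<dots> = h \<otimes> (Y \<otimes> h)" using h Y by (simp add: m_assoc)
  finally have e2: "h [^] Suc (Suc N) = h \<otimes> (Y \<otimes> h)" .
  have e3: "(g \<otimes> h) [^] Suc (Suc N) = T \<otimes> (g \<otimes> h) \<otimes> (g \<otimes> h)" by (simp add: T_def)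
  have "Wd g h (Suc (Suc N)) = (X \<otimes> g \<otimes> g) \<otimes> (h \<otimes> (Y \<otimes> h)) \<otimes> inv (T \<otimes> (g \<otimes> h) \<otimes> (g \<otimes> h))"
    unfolding Wd_def e1 e2 e3 ..
  also have "\<dots> = ((X \<otimes> g \<otimes> inv Y \<otimes> inv X) \<otimes> (X \<otimes> Y \<otimes> g \<otimes> h \<otimes> inv X)
      \<otimes> inv (X \<otimes> g \<otimes> inv Y \<otimes> inv X) \<otimes> inv (X \<otimes> Y \<otimes> g \<otimes> h \<otimes> inv X)) \<otimes> (X \<otimes> Y \<otimes> inv T)"
    by (rule W_step[OF g h X Y T])
  also have "X \<otimes> Y \<otimes> inv T = Wd g h N" by (simp add: Wd_def X_def Y_def T_def)
  finally show ?thesis using g h X Y T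
    by (intro bexI[of _ "X \<otimes> g \<otimes> inv Y \<otimes> inv X"] bexI[of _ "X \<otimes> Y \<otimes> g \<otimes> h \<otimes> inv X"]) auto
qed

lemma qm_Wd:
  assumes q: "qm \<phi> D" and g: "g \<in> carrier G" and h: "h \<in> carrier G"
  shows "\<bar>\<phi> (Wd g h N)\<bar> \<le> 2 * real N * D"
proof (induction N rule: nat_less_induct)
  case (1 N)
  have D0: "0 \<le> D" using qm_D[OF q, of \<one> \<one>] qm_one[OF q] by simp
  show ?case
  proof (cases N)
    case 0
    then show ?thesis using g h qm_one[OF q] by (simp add: Wd_def)
  next
    case (Suc M)
    show ?thesis
    proof (cases M)
      case 0
      then have "Wd g h N = \<one>" using Suc g h by (simp add: Wd_def)
      then show ?thesis using qm_one[OF q] D0 by simp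
    next
      case (Suc K)
      with \<open>N = Suc M\<close> have N: "N = Suc (Suc K)" by simp
      obtain P Q where P: "P \<in> carrier G" and Q: "Q \<in> carrier G"
        and e: "Wd g h N = (P \<otimes> Q \<otimes> inv P \<otimes> inv Q) \<otimes> Wd g h K"
        using Wd_rec[OF g h, of K] N by blast
      have IH: "\<bar>\<phi> (Wd g h K)\<bar> \<le> 2 * real K * D" using 1 N by simp
      have C: "\<bar>\<phi> (P \<otimes> Q \<otimes> inv P \<otimes> inv Q)\<bar> \<le> 3 * D" using qm_comm[OF q P Q] .
      have M: "\<bar>\<phi> (P \<otimes> Q \<otimes> inv P \<otimes> inv Q) + \<phi> (Wd g h K) - \<phi> (Wd g h N)\<bar> \<le> D"
        unfolding e using qm_D[OF q] P Q Wd_closed[OF g h] by simp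
      have "2 * real N * D = 3 * D + 2 * real K * D + D" using N by (simp add: algebra_simps)
      then show ?thesis using IH C M by linarith
    qed
  qed
qed

lemma qm_powers:
  assumes q: "qm \<phi> D" and g: "g \<in> carrier G" and h: "h \<in> carrier G"
  shows "\<bar>\<phi> (g [^] N) + \<phi> (h [^] N) - \<phi> ((g \<otimes> h) [^] N)\<bar> \<le> (2 * real N + 2) * D"
proof -
  define X where "X = g [^] N"
  define Y where "Y = h [^] N"
  define T where "T = (g \<otimes> h) [^] N"
  have X: "X \<in> carrier G" and Y: "Y \<in> carrier G" and T: "T \<in> carrier G"
    using g h by (auto simp: X_def Y_def T_def)
  have W: "Wd g h N = X \<otimes> Y \<otimes> inv T" by (simp add: Wd_def X_def Y_def T_def)
  have XY: "X \<otimes> Y = Wd g h N \<otimes> T" using X Y T unfolding W by (simp add: m_assoc)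
  have 1: "\<bar>\<phi> X + \<phi> Y - \<phi> (X \<otimes> Y)\<bar> \<le> D" using qm_D[OF q X Y] .
  have 2: "\<bar>\<phi> (Wd g h N) + \<phi> T - \<phi> (X \<otimes> Y)\<bar> \<le> D" unfolding XY using qm_D[OF q Wd_closed[OF g h] T] .
  have 3: "\<bar>\<phi> (Wd g h N)\<bar> \<le> 2 * real N * D" by (rule qm_Wd[OF q g h])
  show ?thesis using 1 2 3 unfolding X_def[symmetric] Y_def[symmetric] T_def[symmetric]
    by (simp add: algebra_simps)
qed

end



lemma alt_rev: "alt (rev ws) = alt ws"
proof (induction ws)
  case Nil then show ?case by simp
next
  case (Cons x ws)
  then show ?case by (cases ws) (auto simp: alt_append alt_Cons last_rev hd_rev)
qed

lemma alt_map: "alt (map (\<lambda>(t, x). (t, k x)) ws) = alt ws"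
proof (induction ws)
  case Nil then show ?case by simp
next
  case (Cons p ws)
  then show ?case by (cases ws) (auto simp: alt_Cons split: prod.splits)
qed

context fpa
begin

definition invw :: "(bool \<times> 'g) list \<Rightarrow> (bool \<times> 'g) list" where
  "invw ws = rev (map (\<lambda>(t, x). (t, inv x)) ws)"

lemma red_invw: "red ws \<Longrightarrow> red (invw ws)"
  unfolding red_def invw_def using valid_inv by (auto simp: alt_rev alt_map)

lemma invw_Cons: "invw ((t, x) # ws) = invw ws @ [(t, inv x)]"
  by (simp add: invw_def)

lemma car_invw: "car ws \<Longrightarrow> car (invw ws)"
  by (auto simp: car_def invw_def)

lemma eval_invw: "car ws \<Longrightarrow> word_eval G (invw ws) = inv (word_eval G ws)"
proof (induction ws)
  case Nil then show ?case by (simp add: invw_def)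
next
  case (Cons p ws)
  obtain t x where p: "p = (t, x)" by (cases p)
  have x: "x \<in> carrier G" and c: "car ws" using Cons.prems p by auto
  have "word_eval G (invw (p # ws)) = word_eval G (invw ws) \<otimes> inv x"
    unfolding p invw_Cons using car_invw[OF c] x by (simp add: eval_append)
  also have "\<dots> = inv (word_eval G (p # ws))"
    using Cons.IH[OF c] x eval_closed[OF c] p by (simp add: inv_mult_group)
  finally show ?case .
qed

lemma S_invw: assumes f: "f \<in> defect_space_Z" shows "car ws \<Longrightarrow> S f (invw ws) = - S f ws"
proof (induction ws)
  case Nil then show ?case by (simp add: invw_def)
next
  case (Cons p ws)
  obtain t x where p: "p = (t, x)" by (cases p)
  have x: "x \<in> carrier G" and c: "car ws" using Cons.prems p by auto
  show ?case unfolding p invw_Cons using Cons.IH[OF c] phi_inv[OF f x] by simp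
qed

lemma F_inv: assumes f: "f \<in> defect_space_Z" and g: "g \<in> carrier G"
  shows "F f (inv g) = - F f g"
proof -
  have r: "red (nf g)" using nf_red[OF g] .
  have "inv g = word_eval G (invw (nf g))" using eval_invw[OF red_car[OF r]] eval_nf[OF g] by simp
  then have "F f (inv g) = S f (invw (nf g))" using F_eval[OF red_invw[OF r]] by simp
  also have "\<dots> = - S f (nf g)" using S_invw[OF f red_car[OF r]] .
  finally show ?thesis by (simp add: FG_def)
qed

lemma phi_lin: "phi (\<lambda>n. s * f n + t * f' n) x = s * phi f x + t * phi f' x"
  by (simp add: phiG_def)

lemma S_lin: "S (\<lambda>n. s * f n + t * f' n) ws = s * S f ws + t * S f' ws"
proof (induction ws)
  case Nil then show ?case by simp
next
  case (Cons p ws) then show ?case by (cases p) (simp add: phi_lin algebra_simps)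
qed

lemma F_lin: "F (\<lambda>n. s * f n + t * f' n) g = s * F f g + t * F f' g"
  by (simp add: FG_def S_lin)

lemma F_diff: "F (\<lambda>n. f n - f' n) g = F f g - F f' g"
  using F_lin[of 1 f "-1" f' g] by simp

subsection \<open>Powers of cyclically reduced words\<close>

lemma eval_rep: "car ws \<Longrightarrow> word_eval G (concat (replicate N ws)) = word_eval G ws [^] N"
proof (induction N)
  case 0 then show ?case by simp
next
  case (Suc N)
  have c: "car (concat (replicate N ws))" using Suc.prems by (induction N) auto
  show ?case using Suc eval_closed[OF Suc.prems] c
    by (simp add: eval_append) (metis nat_pow_Suc nat_pow_Suc2)
qed

lemma red_rep:
  assumes r: "red ws" and ne: "ws \<noteq> []" and cyc: "fst (last ws) \<noteq> fst (hd ws)"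
  shows "red (concat (replicate N ws))"
proof (induction N)
  case 0 then show ?case by simp
next
  case (Suc N)
  have hd: "N > 0 \<Longrightarrow> hd (concat (replicate N ws)) = hd ws"
    using ne by (cases N) auto
  show ?case using Suc r ne cyc hd by (auto simp: red_append)
qed

lemma S_rep: "S f (concat (replicate N ws)) = real N * S f ws"
  by (induction N) (auto simp: algebra_simps)

lemma F_pow:
  assumes r: "red ws" and ne: "ws \<noteq> []" and cyc: "fst (last ws) \<noteq> fst (hd ws)"
  shows "F f (word_eval G ws [^] N) = real N * S f ws"
  using F_eval[OF red_rep[OF r ne cyc, of N]] eval_rep[OF red_car[OF r], of N] S_rep by simp

lemma conj_pow: assumes c: "c \<in> carrier G" and x: "x \<in> carrier G"
  shows "(c \<otimes> x \<otimes> inv c) [^] (N::nat) = c \<otimes> x [^] N \<otimes> inv c"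
proof (induction N)
  case 0 then show ?case using c by simp
next
  case (Suc N)
  then show ?case using c x by (simp add: m_assoc)
qed

end



context fpa
begin

lemma apow_valid: "k \<noteq> 0 \<Longrightarrow> valid True (a [^] (k::int))"
  unfolding valid_def using sub_int_pow[OF subA aA, of k] apow_one by auto

lemma lower_pos:
  assumes f: "f \<in> defect_space_Z"
    and K: "\<forall>x \<in> carrier G. \<bar>\<beta> x\<bar> \<le> K"
    and E: "\<forall>x \<in> carrier G. \<forall>y \<in> carrier G.
              \<bar>F f x + F f y - F f (x \<otimes> y) + (\<beta> x + \<beta> y - \<beta> (x \<otimes> y))\<bar> \<le> E"
    and bB: "b \<in> B" and b1: "b \<noteq> \<one>"
    and m: "m \<noteq> 0" and n: "n \<noteq> 0" and mn: "m + n \<noteq> 0"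
  shows "f m + f n - f (m + n) \<le> E"
proof -
  define \<beta>' where "\<beta>' x = (\<beta> x - \<beta> (inv x)) / 2" for x
  define \<psi> where "\<psi> x = F f x + \<beta>' x" for x
  have bc: "b \<in> carrier G" using bB subgroup.subset[OF subB] by blast
  have qm: "qm \<psi> E"
    unfolding qm_def
  proof (intro conjI ballI)
    fix x assume x: "x \<in> carrier G"
    show "\<psi> (inv x) = - \<psi> x" unfolding \<psi>_def \<beta>'_def using F_inv[OF f x] x by (simp add: field_simps)
  next
    fix x y assume x: "x \<in> carrier G" and y: "y \<in> carrier G"
    have e1: "\<bar>F f x + F f y - F f (x \<otimes> y) + (\<beta> x + \<beta> y - \<beta> (x \<otimes> y))\<bar> \<le> E"
      using E x y by blast
    have ix: "inv x \<in> carrier G" and iy: "inv y \<in> carrier G" using x y by auto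
    have e2: "\<bar>F f (inv y) + F f (inv x) - F f (inv y \<otimes> inv x) + (\<beta> (inv y) + \<beta> (inv x) - \<beta> (inv y \<otimes> inv x))\<bar> \<le> E"
      using E iy ix by blast
    have iv: "inv y \<otimes> inv x = inv (x \<otimes> y)" using x y by (simp add: inv_mult_group)
    have xyc: "x \<otimes> y \<in> carrier G" using x y by simp
    have Fi: "F f (inv y \<otimes> inv x) = - F f (x \<otimes> y)" unfolding iv by (rule F_inv[OF f xyc])
    have e2': "\<bar>- F f y - F f x + F f (x \<otimes> y) + (\<beta> (inv y) + \<beta> (inv x) - \<beta> (inv (x \<otimes> y)))\<bar> \<le> E"
      using e2 unfolding iv F_inv[OF f xyc] F_inv[OF f x] F_inv[OF f y] by simp
    have i1: "- E \<le> F f x + F f y - F f (x \<otimes> y) + (\<beta> x + \<beta> y - \<beta> (x \<otimes> y))"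
      "F f x + F f y - F f (x \<otimes> y) + (\<beta> x + \<beta> y - \<beta> (x \<otimes> y)) \<le> E"
      using e1 by (simp_all add: abs_le_iff)
    have i2: "- E \<le> - F f y - F f x + F f (x \<otimes> y) + (\<beta> (inv y) + \<beta> (inv x) - \<beta> (inv (x \<otimes> y)))"
      "- F f y - F f x + F f (x \<otimes> y) + (\<beta> (inv y) + \<beta> (inv x) - \<beta> (inv (x \<otimes> y))) \<le> E"
      using e2' by (simp_all add: abs_le_iff)
    show "\<bar>\<psi> x + \<psi> y - \<psi> (x \<otimes> y)\<bar> \<le> E"
      unfolding \<psi>_def \<beta>'_def abs_le_iff using i1 i2 by (intro conjI; simp add: field_simps; linarith)
  qed
  have K': "\<bar>\<beta>' x\<bar> \<le> K" if x: "x \<in> carrier G" for x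
  proof -
    have "\<bar>\<beta> x\<bar> \<le> K" "\<bar>\<beta> (inv x)\<bar> \<le> K" using K x by auto
    then show ?thesis by (simp add: \<beta>'_def abs_le_iff)
  qed
  define am where "am = a [^] m"
  define an where "an = a [^] n"
  define amn where "amn = a [^] (m + n)"
  have amc: "am \<in> carrier G" and anc: "an \<in> carrier G" and amnc: "amn \<in> carrier G"
    by (auto simp: am_def an_def amn_def)
  have amn1: "amn = am \<otimes> an" by (simp add: amn_def am_def an_def int_pow_mult)
  have amn2: "amn = an \<otimes> am" by (simp add: amn_def am_def an_def int_pow_mult[symmetric] add.commute)
  define lu where "lu = [(True, am), (False, b)]"
  define lv where "lv = [(False, inv b), (True, an)]"
  define lq where "lq = [(False, b), (True, amn), (False, inv b), (True, amn)]"
  have vb: "valid False b" using bB b1 by (simp add: valid_def)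
  have vib: "valid False (inv b)" using valid_inv[OF vb] .
  have ru: "red lu" unfolding lu_def using apow_valid[OF m] vb by (simp add: red_Cons am_def)
  have rv: "red lv" unfolding lv_def using apow_valid[OF n] vib by (simp add: red_Cons an_def)
  have rq: "red lq" unfolding lq_def using apow_valid[OF mn] vb vib by (simp add: red_Cons amn_def)
  define u where "u = word_eval G lu"
  define v where "v = word_eval G lv"
  define w where "w = word_eval G lq"
  have uc: "u \<in> carrier G" and vc: "v \<in> carrier G" and wc: "w \<in> carrier G"
    unfolding u_def v_def w_def using red_car ru rv rq eval_closed by blast+
  have ue: "u = am \<otimes> b" unfolding u_def lu_def using bc by simp
  have ve: "v = inv b \<otimes> an" unfolding v_def lv_def using anc bc by simp
  have we: "w = b \<otimes> (amn \<otimes> (inv b \<otimes> amn))" unfolding w_def lq_def using amnc bc by simp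
  have Su: "S f lu = f m" unfolding lu_def am_def by simp
  have Sv: "S f lv = f n" unfolding lv_def an_def by simp
  have Sq: "S f lq = 2 * f (m + n)" unfolding lq_def amn_def by simp
  define g where "g = u [^] (2::nat)"
  define h where "h = v [^] (2::nat)"
  have gc: "g \<in> carrier G" and hc: "h \<in> carrier G" using uc vc by (auto simp: g_def h_def)
  have gh: "g \<otimes> h = am \<otimes> w \<otimes> inv am"
  proof -
    have "g \<otimes> h = am \<otimes> (b \<otimes> (am \<otimes> (b \<otimes> (inv b \<otimes> (an \<otimes> (inv b \<otimes> an))))))"
      unfolding g_def h_def ue ve using amc anc bc by (simp add: numeral_2_eq_2 m_assoc)
    also have "\<dots> = am \<otimes> (b \<otimes> ((am \<otimes> an) \<otimes> (inv b \<otimes> an)))"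
      using amc anc bc by (simp add: m_assoc)
    also have "\<dots> = am \<otimes> (b \<otimes> (amn \<otimes> (inv b \<otimes> ((an \<otimes> am) \<otimes> inv am))))"
      using amc anc bc by (simp add: m_assoc amn1)
    also have "\<dots> = am \<otimes> w \<otimes> inv am"
      unfolding we amn2[symmetric] using amc anc bc amnc by (simp add: m_assoc)
    finally show ?thesis .
  qed
  have Fg: "F f (g [^] N) = 2 * real N * f m" for N
  proof -
    have "g [^] N = u [^] (2 * N)" unfolding g_def using uc by (simp add: nat_pow_pow)
    moreover have "F f (u [^] (2 * N)) = real (2 * N) * S f lu"
      unfolding u_def by (rule F_pow[OF ru]) (simp_all add: lu_def)
    ultimately show ?thesis using Su by simp
  qed
  have Fh: "F f (h [^] N) = 2 * real N * f n" for N
  proof -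
    have "h [^] N = v [^] (2 * N)" unfolding h_def using vc by (simp add: nat_pow_pow)
    moreover have "F f (v [^] (2 * N)) = real (2 * N) * S f lv"
      unfolding v_def by (rule F_pow[OF rv]) (simp_all add: lv_def)
    ultimately show ?thesis using Sv by simp
  qed
  have Fw: "F f (w [^] N) = 2 * real N * f (m + n)" for N
  proof -
    have "F f (w [^] N) = real N * S f lq"
      unfolding w_def by (rule F_pow[OF rq]) (simp_all add: lq_def)
    then show ?thesis using Sq by simp
  qed
  define Df where "Df = defect f"
  have Fgh: "F f ((g \<otimes> h) [^] N) \<le> 2 * real N * f (m + n) + 2 * Df" for N
  proof -
    have e: "(g \<otimes> h) [^] N = am \<otimes> w [^] N \<otimes> inv am" unfolding gh using conj_pow[OF amc wc] .
    have wN: "w [^] N \<in> carrier G" using wc by simp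
    have 1: "\<bar>F f am + F f (w [^] N) - F f (am \<otimes> w [^] N)\<bar> \<le> Df"
      using upper[OF f amc wN] by (simp add: Df_def)
    have 2: "\<bar>F f (am \<otimes> w [^] N) + F f (inv am) - F f (am \<otimes> w [^] N \<otimes> inv am)\<bar> \<le> Df"
      using upper[OF f, of "am \<otimes> w [^] N" "inv am"] amc wN by (simp add: Df_def)
    show ?thesis unfolding e using 1 2 F_inv[OF f amc] Fw[of N] by linarith
  qed
  have main: "2 * real N * (f m + f n - f (m + n)) \<le> (2 * real N + 2) * E + 2 * Df + 3 * K" for N
  proof -
    have P: "\<bar>\<psi> (g [^] N) + \<psi> (h [^] N) - \<psi> ((g \<otimes> h) [^] N)\<bar> \<le> (2 * real N + 2) * E"
      by (rule qm_powers[OF qm gc hc])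
    have b1: "\<bar>\<beta>' (g [^] N)\<bar> \<le> K" "\<bar>\<beta>' (h [^] N)\<bar> \<le> K" "\<bar>\<beta>' ((g \<otimes> h) [^] N)\<bar> \<le> K"
      using K' gc hc by auto
    have "2 * real N * (f m + f n - f (m + n)) = F f (g [^] N) + F f (h [^] N) - 2 * real N * f (m + n)"
      using Fg Fh by (simp add: algebra_simps)
    then show ?thesis using P b1 Fgh[of N] unfolding \<psi>_def by linarith
  qed
  show ?thesis
  proof (rule ccontr)
    assume "\<not> ?thesis"
    then have pos: "f m + f n - f (m + n) - E > 0" by simp
    obtain N :: nat where N: "real N * (f m + f n - f (m + n) - E) > E + Df + 2 * K"
      using reals_Archimedean3[OF pos] by blast
    have "2 * real N * (f m + f n - f (m + n) - E) \<le> 2 * E + 2 * Df + 3 * K"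
      using main[of N] by (simp add: algebra_simps)
    moreover have "0 \<le> K" using K one_closed by (meson abs_ge_zero order_trans)
    ultimately show False using N by linarith
  qed
qed

end



context group
begin

lemma bounded1_zero: "bounded1 G (\<lambda>_. 0)"
  unfolding bounded1_def by (rule exI[of _ 0]) simp

abbreviation sb :: "('a \<Rightarrow> 'a \<Rightarrow> real) \<Rightarrow> ('a \<Rightarrow> real) \<Rightarrow> real" where
  "sb c b \<equiv> (SUP (g, h) \<in> carrier G \<times> carrier G. \<bar>c g h + cobound1 G b g h\<bar>)"

lemma bdd_gn:
  assumes c: "bounded2 G c" and b: "bounded1 G b"
  shows "bdd_above ((\<lambda>(g, h). \<bar>c g h + cobound1 G b g h\<bar>) ` (carrier G \<times> carrier G))"
proof -
  obtain C where C: "\<forall>g\<in>carrier G. \<forall>h\<in>carrier G. \<bar>c g h\<bar> \<le> C" using c by (auto simp: bounded2_def)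
  obtain K where K: "\<forall>g\<in>carrier G. \<bar>b g\<bar> \<le> K" using b by (auto simp: bounded1_def)
  have "\<bar>c g h + cobound1 G b g h\<bar> \<le> C + 3 * K" if g: "g \<in> carrier G" and h: "h \<in> carrier G" for g h
  proof -
    have "\<bar>c g h\<bar> \<le> C" "\<bar>b g\<bar> \<le> K" "\<bar>b h\<bar> \<le> K" "\<bar>b (g \<otimes> h)\<bar> \<le> K" using C K g h by auto
    then show ?thesis unfolding cobound1_def by linarith
  qed
  then show ?thesis by (intro bdd_aboveI[of _ "C + 3 * K"]) auto
qed

lemma gn_pt:
  assumes c: "bounded2 G c" and b: "bounded1 G b" and g: "g \<in> carrier G" and h: "h \<in> carrier G"
  shows "\<bar>c g h + cobound1 G b g h\<bar> \<le> sb c b"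
proof -
  have "(\<lambda>(g, h). \<bar>c g h + cobound1 G b g h\<bar>) (g, h) \<le> sb c b"
    by (rule cSUP_upper[OF _ bdd_gn[OF c b]]) (use g h in simp)
  then show ?thesis by simp
qed

lemma sb_le:
  assumes "\<forall>g\<in>carrier G. \<forall>h\<in>carrier G. \<bar>c g h + cobound1 G b g h\<bar> \<le> E"
  shows "sb c b \<le> E"
  by (rule cSUP_least) (use assms in auto)

lemma sb_nonneg: "bounded2 G c \<Longrightarrow> bounded1 G b \<Longrightarrow> 0 \<le> sb c b"
  using gn_pt[of c b \<one> \<one>] by (meson abs_ge_zero one_closed order_trans)

lemma gn_set_ne: "{sb c b | b. bounded1 G b} \<noteq> {}"
proof -
  have "bounded1 G (\<lambda>_. 0)" by (rule bounded1_zero)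
  then show ?thesis by blast
qed

lemma gn_le:
  assumes c: "bounded2 G c" and D: "\<forall>g\<in>carrier G. \<forall>h\<in>carrier G. \<bar>c g h\<bar> \<le> D"
  shows "gromov_norm G c \<le> D"
proof -
  have b0: "bounded1 G (\<lambda>_. 0)" by (rule bounded1_zero)
  have "sb c (\<lambda>_. 0) \<le> D" by (rule sb_le) (use D in \<open>simp add: cobound1_def\<close>)
  moreover have "bdd_below {sb c b | b. bounded1 G b}"
    using sb_nonneg[OF c] by (auto intro!: bdd_belowI[of _ 0])
  ultimately show ?thesis unfolding gromov_norm_def
    by (intro cInf_lower2[of "sb c (\<lambda>_. 0)"]) (use b0 in auto)
qed

lemma gn_ge:
  assumes c: "bounded2 G c"
    and H: "\<And>b E. bounded1 G b \<Longrightarrow> \<forall>g\<in>carrier G. \<forall>h\<in>carrier G. \<bar>c g h + cobound1 G b g h\<bar> \<le> E \<Longrightarrow> L \<le> E"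
  shows "L \<le> gromov_norm G c"
  unfolding gromov_norm_def
proof (rule cInf_greatest[OF gn_set_ne])
  fix x assume "x \<in> {sb c b | b. bounded1 G b}"
  then obtain b where b: "bounded1 G b" and x: "x = sb c b" by blast
  show "L \<le> x" unfolding x using H[OF b] gn_pt[OF c b] by blast
qed

lemma gn_lt:
  assumes c: "bounded2 G c" and lt: "gromov_norm G c < z"
  shows "\<exists>b e. bounded1 G b \<and> e < z \<and> (\<forall>g\<in>carrier G. \<forall>h\<in>carrier G. \<bar>c g h + cobound1 G b g h\<bar> \<le> e)"
proof -
  obtain x where "x \<in> {sb c b | b. bounded1 G b}" "x < z"
    using cInf_lessD[OF gn_set_ne lt[unfolded gromov_norm_def]] by blast
  then obtain b where b: "bounded1 G b" and x: "sb c b < z" by blast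
  show ?thesis using b x gn_pt[OF c b] by blast
qed

end

context fpa
begin

lemma lower:
  assumes f: "f \<in> defect_space_Z"
    and K: "\<forall>x \<in> carrier G. \<bar>\<beta> x\<bar> \<le> K"
    and E: "\<forall>x \<in> carrier G. \<forall>y \<in> carrier G.
              \<bar>F f x + F f y - F f (x \<otimes> y) + (\<beta> x + \<beta> y - \<beta> (x \<otimes> y))\<bar> \<le> E"
    and bB: "b \<in> B" and b1: "b \<noteq> \<one>"
  shows "defect f \<le> E"
proof -
  have E0: "0 \<le> E" using E one_closed by (meson abs_ge_zero order_trans)
  have "\<bar>f m + f n - f (m + n)\<bar> \<le> E" for m n
  proof (cases "m = 0 \<or> n = 0 \<or> m + n = 0")
    case True
    then have "f m + f n - f (m + n) = 0"
      using dZ_zero[OF f] dZ_alt[OF f, of m] by (auto simp: add_eq_0_iff)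
    then show ?thesis using E0 by simp
  next
    case False
    have 1: "f m + f n - f (m + n) \<le> E" using lower_pos[OF f K E bB b1, of m n] False by simp
    have 2: "f (-m) + f (-n) - f (-m + -n) \<le> E" using lower_pos[OF f K E bB b1, of "-m" "-n"] False by simp
    have "f (-m + -n) = - f (m + n)" using dZ_alt[OF f, of "m + n"] by simp
    then show ?thesis using 1 2 dZ_alt[OF f, of m] dZ_alt[OF f, of n] by simp
  qed
  then show ?thesis unfolding defect_def by (intro cSUP_least) auto
qed

end



lemma nat_set_uncountable: "\<not> countable (UNIV :: nat set set)"
proof
  assume c: "countable (UNIV :: nat set set)"
  define e where "e = from_nat_into (UNIV :: nat set set)"
  have r: "range e = UNIV" unfolding e_def using range_from_nat_into[OF _ c] by simp
  define D where "D = {n. n \<notin> e n}"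
  obtain m where "e m = D" using r by (metis UNIV_I imageE)
  then show False unfolding D_def by blast
qed

definition fam :: "nat set \<Rightarrow> int \<Rightarrow> real" where
  "fam X n = (if 0 < n \<and> n \<in> (\<lambda>k. 3 ^ k) ` X then 1
              else if n < 0 \<and> - n \<in> (\<lambda>k. 3 ^ k) ` X then -1 else 0)"

lemma fam_dZ: "fam X \<in> defect_space_Z"
  unfolding defect_space_Z_def
proof (intro CollectI conjI allI exI)
  fix n show "\<bar>fam X n\<bar> \<le> 1" by (simp add: fam_def)
next
  fix n :: int show "fam X (- n) = - fam X n"
    by (cases "n > 0"; cases "n < 0") (auto simp: fam_def)
qed

lemma dZ_diff: "f \<in> defect_space_Z \<Longrightarrow> f' \<in> defect_space_Z \<Longrightarrow> (\<lambda>n. f n - f' n) \<in> defect_space_Z"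
proof -
  assume f: "f \<in> defect_space_Z" and f': "f' \<in> defect_space_Z"
  obtain C where C: "\<forall>n. \<bar>f n\<bar> \<le> C" using dZ_bounded[OF f] by blast
  obtain C' where C': "\<forall>n. \<bar>f' n\<bar> \<le> C'" using dZ_bounded[OF f'] by blast
  have "\<bar>f n - f' n\<bar> \<le> C + C'" for n using C[rule_format, of n] C'[rule_format, of n] by linarith
  moreover have "f (- n) - f' (- n) = - (f n - f' n)" for n using dZ_alt[OF f] dZ_alt[OF f'] by simp
  ultimately show ?thesis unfolding defect_space_Z_def by blast
qed

lemma pow3_odd: "odd ((3::int) ^ j)" by simp

lemma fam_sep_aux:
  assumes k: "k \<in> X" "k \<notin> Y"
  shows "2 \<le> defect (\<lambda>n. fam X n - fam Y n)"
proof -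
  define d where "d = (\<lambda>n. fam X n - fam Y n)"
  have dd: "d \<in> defect_space_Z" unfolding d_def using dZ_diff[OF fam_dZ fam_dZ] .
  define n where "n = (3::int) ^ k"
  have npos: "0 < n" by (simp add: n_def)
  have inj3: "(3::int) ^ j = 3 ^ k \<longleftrightarrow> j = k" for j by (simp add: power_inject_exp)
  have "d n = 1" using k npos by (auto simp: d_def fam_def n_def inj3)
  moreover have "d (n + n) = 0"
  proof -
    have "n + n \<notin> (\<lambda>k. (3::int) ^ k) ` Z" for Z
    proof
      assume "n + n \<in> (\<lambda>k. (3::int) ^ k) ` Z"
      then obtain j where "n + n = 3 ^ j" by blast
      then have "even ((3::int) ^ j)" by (metis even_add)
      then show False using pow3_odd by blast
    qed
    then show ?thesis using npos by (simp add: d_def fam_def)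
  qed
  ultimately have "\<bar>d n + d n - d (n + n)\<bar> = 2" by simp
  then show ?thesis using dZ_delta[OF dd, of n n] unfolding d_def by simp
qed

lemma fam_sep:
  assumes "X \<noteq> Y"
  shows "2 \<le> defect (\<lambda>n. fam X n - fam Y n)"
proof -
  obtain k where "(k \<in> X \<and> k \<notin> Y) \<or> (k \<in> Y \<and> k \<notin> X)" using assms by blast
  then show ?thesis
  proof
    assume "k \<in> X \<and> k \<notin> Y" then show ?thesis using fam_sep_aux by blast
  next
    assume "k \<in> Y \<and> k \<notin> X"
    then have "2 \<le> defect (\<lambda>n. fam Y n - fam X n)" using fam_sep_aux by blast
    moreover have "defect (\<lambda>n. fam Y n - fam X n) = defect (\<lambda>n. fam X n - fam Y n)"
      unfolding defect_def by (rule SUP_cong) (auto simp: abs_minus_commute)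
    ultimately show ?thesis by simp
  qed
qed

theorem corollary3p7:
  fixes \<Gamma> :: "('g, 'm) monoid_scheme" and A B :: "'g set"
  assumes "is_free_product \<Gamma> A B"
    and "A \<noteq> {\<one>\<^bsub>\<Gamma>\<^esub>}" and "B \<noteq> {\<one>\<^bsub>\<Gamma>\<^esub>}"
    and "\<exists>a \<in> A. \<forall>n::nat. n > 0 \<longrightarrow> a [^]\<^bsub>\<Gamma>\<^esub> n \<noteq> \<one>\<^bsub>\<Gamma>\<^esub>"
  shows "(\<exists>\<Phi> :: (int \<Rightarrow> real) \<Rightarrow> ('g \<Rightarrow> 'g \<Rightarrow> real).
            (\<forall>f \<in> defect_space_Z. bcocycle2 \<Gamma> (\<Phi> f)) \<and>
            (\<forall>f \<in> defect_space_Z. \<forall>f' \<in> defect_space_Z. \<forall>s t :: real.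
               bcohomologous \<Gamma> (\<Phi> (\<lambda>n. s * f n + t * f' n))
                               (\<lambda>g h. s * \<Phi> f g h + t * \<Phi> f' g h)) \<and>
            (\<forall>f \<in> defect_space_Z. gromov_norm \<Gamma> (\<Phi> f) = defect f))
       \<and> \<not> (\<exists>S. countable S \<and> (\<forall>s \<in> S. bcocycle2 \<Gamma> s) \<and>
              (\<forall>c. bcocycle2 \<Gamma> c \<longrightarrow> (\<forall>\<epsilon>>0. \<exists>s \<in> S.
                  gromov_norm \<Gamma> (\<lambda>g h. c g h - s g h) < \<epsilon>)))"
proof -
  obtain a where aA: "a \<in> A" and ainf: "\<forall>n::nat. n > 0 \<longrightarrow> a [^]\<^bsub>\<Gamma>\<^esub> n \<noteq> \<one>\<^bsub>\<Gamma>\<^esub>"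
    using assms(4) by blast
  interpret I: fpa \<Gamma> A B a
    using assms(1) aA ainf by (simp add: fpa_def fpa_axioms_def fp_def)
  have one_B: "\<one>\<^bsub>\<Gamma>\<^esub> \<in> B" using subgroup.one_closed[OF I.subB] .
  obtain b where bB: "b \<in> B" and b1: "b \<noteq> \<one>\<^bsub>\<Gamma>\<^esub>" using assms(3) one_B by blast
  define F where "F = FG \<Gamma> A B a"
  define \<Phi> where "\<Phi> f = cobound1 \<Gamma> (F f)" for f
  have cocycle: "bcocycle2 \<Gamma> (\<Phi> f)" if f: "f \<in> defect_space_Z" for f
    unfolding bcocycle2_def
  proof (intro conjI ballI)
    show "bounded2 \<Gamma> (\<Phi> f)" unfolding bounded2_def \<Phi>_def cobound1_def F_def
      using I.upper[OF f] by blast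
  next
    fix g1 g2 g3 assume "g1 \<in> carrier \<Gamma>" "g2 \<in> carrier \<Gamma>" "g3 \<in> carrier \<Gamma>"
    then show "\<Phi> f g2 g3 - \<Phi> f (g1 \<otimes>\<^bsub>\<Gamma>\<^esub> g2) g3 + \<Phi> f g1 (g2 \<otimes>\<^bsub>\<Gamma>\<^esub> g3) - \<Phi> f g1 g2 = 0"
      unfolding \<Phi>_def cobound1_def by (simp add: I.m_assoc)
  qed
  have bd2: "bounded2 \<Gamma> (\<Phi> f)" if "f \<in> defect_space_Z" for f
    using cocycle[OF that] by (simp add: bcocycle2_def)
  have lin: "bcohomologous \<Gamma> (\<Phi> (\<lambda>n. s * f n + t * f' n)) (\<lambda>g h. s * \<Phi> f g h + t * \<Phi> f' g h)"
    for f f' s t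
    unfolding bcohomologous_def
    by (intro exI[of _ "\<lambda>_. 0"] conjI I.bounded1_zero)
       (simp add: \<Phi>_def cobound1_def F_def I.F_lin algebra_simps)
  have lowerE: "defect f \<le> E" if f: "f \<in> defect_space_Z" and b: "bounded1 \<Gamma> \<beta>"
    and E: "\<forall>g\<in>carrier \<Gamma>. \<forall>h\<in>carrier \<Gamma>. \<bar>\<Phi> f g h + cobound1 \<Gamma> \<beta> g h\<bar> \<le> E" for f \<beta> E
  proof -
    obtain K where K: "\<forall>x\<in>carrier \<Gamma>. \<bar>\<beta> x\<bar> \<le> K" using b by (auto simp: bounded1_def)
    show ?thesis
      by (rule I.lower[OF f K _ bB b1]) (use E in \<open>simp add: \<Phi>_def cobound1_def F_def\<close>)
  qed
  have norm: "gromov_norm \<Gamma> (\<Phi> f) = defect f" if f: "f \<in> defect_space_Z" for f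
  proof (rule antisym)
    show "gromov_norm \<Gamma> (\<Phi> f) \<le> defect f"
      by (rule I.gn_le[OF bd2[OF f]]) (use I.upper[OF f] in \<open>simp add: \<Phi>_def cobound1_def F_def\<close>)
    show "defect f \<le> gromov_norm \<Gamma> (\<Phi> f)"
      by (rule I.gn_ge[OF bd2[OF f]]) (rule lowerE[OF f])
  qed
  have part2: "\<not> (\<exists>S. countable S \<and> (\<forall>s \<in> S. bcocycle2 \<Gamma> s) \<and>
              (\<forall>c. bcocycle2 \<Gamma> c \<longrightarrow> (\<forall>\<epsilon>>0. \<exists>s \<in> S.
                  gromov_norm \<Gamma> (\<lambda>g h. c g h - s g h) < \<epsilon>)))"
  proof
    assume "\<exists>S. countable S \<and> (\<forall>s \<in> S. bcocycle2 \<Gamma> s) \<and>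
              (\<forall>c. bcocycle2 \<Gamma> c \<longrightarrow> (\<forall>\<epsilon>>0. \<exists>s \<in> S.
                  gromov_norm \<Gamma> (\<lambda>g h. c g h - s g h) < \<epsilon>))"
    then obtain S where cS: "countable S" and Sc: "\<forall>s \<in> S. bcocycle2 \<Gamma> s"
      and dense: "\<forall>c. bcocycle2 \<Gamma> c \<longrightarrow> (\<forall>\<epsilon>>0. \<exists>s \<in> S. gromov_norm \<Gamma> (\<lambda>g h. c g h - s g h) < \<epsilon>)"
      by blast
    have "\<forall>X. \<exists>s \<in> S. gromov_norm \<Gamma> (\<lambda>g h. \<Phi> (fam X) g h - s g h) < 1/2"
    proof
      fix X
      have "(1::real) / 2 > 0" by simp
      then show "\<exists>s \<in> S. gromov_norm \<Gamma> (\<lambda>g h. \<Phi> (fam X) g h - s g h) < 1/2"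
        using dense cocycle[OF fam_dZ, of X] by blast
    qed
    then obtain sel where sel: "\<forall>X. sel X \<in> S \<and> gromov_norm \<Gamma> (\<lambda>g h. \<Phi> (fam X) g h - sel X g h) < 1/2"
      by metis
    have "\<not> inj sel"
    proof
      assume "inj sel"
      moreover have "countable (range sel)" using sel cS by (meson countable_subset image_subset_iff)
      ultimately show False using countable_image_inj_on nat_set_uncountable by blast
    qed
    then obtain X Y where XY: "X \<noteq> Y" and sXY: "sel X = sel Y" unfolding inj_def by blast
    define s where "s = sel X"
    have sS: "s \<in> S" using sel s_def by blast
    have bs: "bounded2 \<Gamma> s" using Sc sS by (simp add: bcocycle2_def)
    have bdiff: "bounded2 \<Gamma> (\<lambda>g h. c g h - s g h)" if c: "bounded2 \<Gamma> c" for c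
    proof -
      obtain C where C: "\<forall>g\<in>carrier \<Gamma>. \<forall>h\<in>carrier \<Gamma>. \<bar>c g h\<bar> \<le> C" using c by (auto simp: bounded2_def)
      obtain C' where C': "\<forall>g\<in>carrier \<Gamma>. \<forall>h\<in>carrier \<Gamma>. \<bar>s g h\<bar> \<le> C'" using bs by (auto simp: bounded2_def)
      have "\<forall>g\<in>carrier \<Gamma>. \<forall>h\<in>carrier \<Gamma>. \<bar>c g h - s g h\<bar> \<le> C + C'"
        using C C' by (meson abs_triangle_ineq4 add_mono order_trans)
      then show ?thesis unfolding bounded2_def by blast
    qed
    obtain b1 e1 where b1: "bounded1 \<Gamma> b1" and e1: "e1 < 1/2"
      and p1: "\<forall>g\<in>carrier \<Gamma>. \<forall>h\<in>carrier \<Gamma>. \<bar>\<Phi> (fam X) g h - s g h + cobound1 \<Gamma> b1 g h\<bar> \<le> e1"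
    proof -
      have gX: "gromov_norm \<Gamma> (\<lambda>g h. \<Phi> (fam X) g h - s g h) < 1/2"
        using sel unfolding s_def by blast
      show ?thesis using I.gn_lt[OF bdiff[OF bd2[OF fam_dZ]] gX] that by blast
    qed
    obtain b2 e2 where b2: "bounded1 \<Gamma> b2" and e2: "e2 < 1/2"
      and p2: "\<forall>g\<in>carrier \<Gamma>. \<forall>h\<in>carrier \<Gamma>. \<bar>\<Phi> (fam Y) g h - s g h + cobound1 \<Gamma> b2 g h\<bar> \<le> e2"
    proof -
      have gY: "gromov_norm \<Gamma> (\<lambda>g h. \<Phi> (fam Y) g h - s g h) < 1/2"
        using sel unfolding s_def sXY by blast
      show ?thesis using I.gn_lt[OF bdiff[OF bd2[OF fam_dZ]] gY] that by blast
    qed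
    define d where "d = (\<lambda>n. fam X n - fam Y n)"
    have dd: "d \<in> defect_space_Z" unfolding d_def using dZ_diff[OF fam_dZ fam_dZ] .
    have b12: "bounded1 \<Gamma> (\<lambda>x. b1 x - b2 x)"
    proof -
      obtain K1 where K1: "\<forall>g\<in>carrier \<Gamma>. \<bar>b1 g\<bar> \<le> K1" using b1 by (auto simp: bounded1_def)
      obtain K2 where K2: "\<forall>g\<in>carrier \<Gamma>. \<bar>b2 g\<bar> \<le> K2" using b2 by (auto simp: bounded1_def)
      have "\<forall>g\<in>carrier \<Gamma>. \<bar>b1 g - b2 g\<bar> \<le> K1 + K2"
        using K1 K2 by (meson abs_triangle_ineq4 add_mono order_trans)
      then show ?thesis unfolding bounded1_def by blast
    qed
    have Phid: "\<Phi> d g h = \<Phi> (fam X) g h - \<Phi> (fam Y) g h" for g h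
      unfolding \<Phi>_def cobound1_def F_def d_def I.F_diff by simp
    have "\<forall>g\<in>carrier \<Gamma>. \<forall>h\<in>carrier \<Gamma>. \<bar>\<Phi> d g h + cobound1 \<Gamma> (\<lambda>x. b1 x - b2 x) g h\<bar> \<le> e1 + e2"
    proof (intro ballI)
      fix g h assume g: "g \<in> carrier \<Gamma>" and h: "h \<in> carrier \<Gamma>"
      have "\<Phi> d g h + cobound1 \<Gamma> (\<lambda>x. b1 x - b2 x) g h =
         (\<Phi> (fam X) g h - s g h + cobound1 \<Gamma> b1 g h) - (\<Phi> (fam Y) g h - s g h + cobound1 \<Gamma> b2 g h)"
        unfolding Phid by (simp add: cobound1_def)
      then show "\<bar>\<Phi> d g h + cobound1 \<Gamma> (\<lambda>x. b1 x - b2 x) g h\<bar> \<le> e1 + e2"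
        using p1[rule_format, OF g h] p2[rule_format, OF g h] by (simp only: abs_le_iff) linarith
    qed
    then have "defect d \<le> e1 + e2" by (rule lowerE[OF dd b12])
    moreover have "2 \<le> defect d" unfolding d_def using fam_sep[OF XY] .
    ultimately show False using e1 e2 by linarith
  qed
  show ?thesis
    by (intro conjI exI[of _ \<Phi>] part2) (use cocycle lin norm in auto)
qed


end
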